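(* Let $f_1,\dots,f_n:\mathbb{R}^d\to\mathbb{R}$ be such that each $f_i$ is $L_i$-smooth and has a minimizer $x_i$, let $\alpha_1,\dots,\alpha_n\in(0,1)$ and $\tilde f(x) = \frac{1}{n}\sum_{i=1}^n f_i(\alpha_i x + (1-\alpha_i)x_i)$. Let $x^\alpha$ be a minimizer of $\tilde f$ and $L_\alpha = \frac{1}{n}\sum_i\alpha_i^2 L_i$. Then for every $x\in\mathbb{R}^d$, \[ \|\nabla\tilde f(x)\| \leq L_\alpha\|x - x^\alpha\| \quad\text{and}\quad \tilde f(x) - \tilde f(x^\alpha) \leq \frac{L_\alpha}{2}\|x - x^\alpha\|^2. \]
   Context: A differentiable $g$ is $L$-smooth if $\|\nabla g(x)-\nabla g(y)\|\leq L\|x-y\|$ for all $x,y$. *)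

theory Defs
  imports "HOL-Analysis.Analysis"
begin

definition has_gradient :: "('a::euclidean_space \<Rightarrow> real) \<Rightarrow> 'a \<Rightarrow> 'a \<Rightarrow> bool" where
  "has_gradient g v x \<longleftrightarrow> (g has_derivative (\<lambda>h. v \<bullet> h)) (at x)"

definition L_smooth :: "real \<Rightarrow> ('a::euclidean_space \<Rightarrow> real) \<Rightarrow> bool" where
  "L_smooth L g \<longleftrightarrow> (\<exists>G. (\<forall>x. has_gradient g (G x) x) \<and>
      (\<forall>x y. norm (G x - G y) \<le> L * norm (x - y)))"

definition is_minimizer :: "('a \<Rightarrow> real) \<Rightarrow> 'a \<Rightarrow> bool" where
  "is_minimizer g z \<longleftrightarrow> (\<forall>y. g z \<le> g y)"

end

theory Submission
  imports Defs
begin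

lemma grad_zero_at_min:
  fixes g :: "'a::euclidean_space \<Rightarrow> real"
  assumes "has_gradient g v z" "is_minimizer g z"
  shows "v = 0"
proof -
  have "(\<lambda>h. v \<bullet> h) = (\<lambda>h. 0)"
    using has_derivative_local_min[of g "\<lambda>h. v \<bullet> h" z] assms
    unfolding has_gradient_def is_minimizer_def by auto
  then have "v \<bullet> v = 0" by metis
  then show ?thesis by simp
qed

lemma descent:
  fixes g :: "'a::euclidean_space \<Rightarrow> real" and Gt :: "'a \<Rightarrow> 'a"
  assumes grad: "\<And>x. has_gradient g (Gt x) x"
    and lip: "\<And>x y. norm (Gt x - Gt y) \<le> c * norm (x - y)"
    and z0: "Gt z = 0"
  shows "g x - g z \<le> c / 2 * (norm (x - z))\<^sup>2"
proof -
  define h where "h = x - z"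
  define \<phi> where "\<phi> = (\<lambda>t::real. g (z + t *\<^sub>R h) - c / 2 * (norm h)\<^sup>2 * t\<^sup>2)"
  have "\<phi> 1 \<le> \<phi> 0"
  proof (rule DERIV_nonpos_imp_nonincreasing[of 0 1])
    fix t :: real assume t: "0 \<le> t" "t \<le> 1"
    have d1: "((\<lambda>t. z + t *\<^sub>R h) has_derivative (\<lambda>s. s *\<^sub>R h)) (at t)"
      by (auto intro!: derivative_eq_intros)
    have d2: "(g has_derivative (\<lambda>k. Gt (z + t *\<^sub>R h) \<bullet> k)) (at (z + t *\<^sub>R h))"
      using grad unfolding has_gradient_def by blast
    have "((\<lambda>t. g (z + t *\<^sub>R h)) has_derivative (\<lambda>s. Gt (z + t *\<^sub>R h) \<bullet> (s *\<^sub>R h))) (at t)"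
      using has_derivative_compose[OF d1 d2] by (simp add: o_def)
    then have "((\<lambda>t. g (z + t *\<^sub>R h)) has_derivative (*) (Gt (z + t *\<^sub>R h) \<bullet> h)) (at t)"
      by (rule has_derivative_eq_rhs) (rule ext, simp add: mult.commute)
    then have D: "((\<lambda>t. g (z + t *\<^sub>R h)) has_real_derivative (Gt (z + t *\<^sub>R h) \<bullet> h)) (at t)"
      by (simp add: has_field_derivative_def)
    have "DERIV \<phi> t :> Gt (z + t *\<^sub>R h) \<bullet> h - c / 2 * (norm h)\<^sup>2 * (2 * t)"
    proof -
      have P: "DERIV (\<lambda>t. c / 2 * (norm h)\<^sup>2 * t\<^sup>2) t :> c / 2 * (norm h)\<^sup>2 * (2 * t)"
        by (auto intro!: derivative_eq_intros)
      show ?thesis unfolding \<phi>_def by (rule DERIV_diff[OF D P])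
    qed
    moreover have "Gt (z + t *\<^sub>R h) \<bullet> h \<le> c / 2 * (norm h)\<^sup>2 * (2 * t)"
    proof -
      have "Gt (z + t *\<^sub>R h) \<bullet> h \<le> norm (Gt (z + t *\<^sub>R h)) * norm h"
        by (rule norm_cauchy_schwarz)
      also have "norm (Gt (z + t *\<^sub>R h)) = norm (Gt (z + t *\<^sub>R h) - Gt z)" using z0 by simp
      also have "\<dots> \<le> c * norm (t *\<^sub>R h)" using lip[of "z + t *\<^sub>R h" z] by simp
      also have "c * norm (t *\<^sub>R h) = c * t * norm h" using t by simp
      finally have "Gt (z + t *\<^sub>R h) \<bullet> h \<le> c * t * norm h * norm h"
        by (simp add: mult_right_mono)
      then show ?thesis by (simp add: power2_eq_square algebra_simps)
    qed
    ultimately show "\<exists>y. DERIV \<phi> t :> y \<and> y \<le> 0" by (intro exI conjI) auto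
  qed simp
  then show ?thesis unfolding \<phi>_def h_def by simp
qed

theorem proposition4:
  fixes n :: nat and f :: "nat \<Rightarrow> 'a::euclidean_space \<Rightarrow> real"
    and L :: "nat \<Rightarrow> real" and xs :: "nat \<Rightarrow> 'a" and \<alpha> :: "nat \<Rightarrow> real"
    and ft :: "'a \<Rightarrow> real" and x\<alpha> :: 'a and L\<alpha> :: real
  assumes "n \<ge> 1"
    and smooth: "\<And>i. i \<in> {1..n} \<Longrightarrow> L_smooth (L i) (f i)"
    and minim: "\<And>i. i \<in> {1..n} \<Longrightarrow> is_minimizer (f i) (xs i)"
    and alpha: "\<And>i. i \<in> {1..n} \<Longrightarrow> 0 < \<alpha> i \<and> \<alpha> i < 1"
    and ft_def: "ft = (\<lambda>x. (1 / real n) * (\<Sum>i=1..n. f i (\<alpha> i *\<^sub>R x + (1 - \<alpha> i) *\<^sub>R xs i)))"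
    and xmin: "is_minimizer ft x\<alpha>"
    and L\<alpha>_def: "L\<alpha> = (1 / real n) * (\<Sum>i=1..n. (\<alpha> i)\<^sup>2 * L i)"
  shows "\<forall>x. (\<exists>G. has_gradient ft G x \<and> norm G \<le> L\<alpha> * norm (x - x\<alpha>))
             \<and> ft x - ft x\<alpha> \<le> L\<alpha> / 2 * (norm (x - x\<alpha>))\<^sup>2"
proof -
  have "\<forall>i\<in>{1..n}. \<exists>G. (\<forall>x. has_gradient (f i) (G x) x) \<and>
      (\<forall>x y. norm (G x - G y) \<le> L i * norm (x - y))"
    using smooth unfolding L_smooth_def by blast
  then obtain Gs where Gs0: "\<forall>i\<in>{1..n}. (\<forall>x. has_gradient (f i) (Gs i x) x) \<and>
      (\<forall>x y. norm (Gs i x - Gs i y) \<le> L i * norm (x - y))"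
    by (rule bchoice[elim_format]) blast
  have Gs: "\<And>i. i \<in> {1..n} \<Longrightarrow> (\<forall>x. has_gradient (f i) (Gs i x) x) \<and>
      (\<forall>x y. norm (Gs i x - Gs i y) \<le> L i * norm (x - y))"
    using Gs0 by blast
  define y where "y = (\<lambda>i x. \<alpha> i *\<^sub>R x + (1 - \<alpha> i) *\<^sub>R xs i)"
  define Gt where "Gt = (\<lambda>x. (1 / real n) *\<^sub>R (\<Sum>i=1..n. \<alpha> i *\<^sub>R Gs i (y i x)))"
  have grad: "has_gradient ft (Gt x) x" for x
  proof -
    have di: "((\<lambda>x. f i (y i x)) has_derivative (\<lambda>h. (\<alpha> i *\<^sub>R Gs i (y i x)) \<bullet> h)) (at x)"
      if i: "i \<in> {1..n}" for i
    proof -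
      have d1: "(y i has_derivative (\<lambda>h. \<alpha> i *\<^sub>R h)) (at x)"
        unfolding y_def by (auto intro!: derivative_eq_intros)
      have d2: "(f i has_derivative (\<lambda>k. Gs i (y i x) \<bullet> k)) (at (y i x))"
        using Gs[OF i] unfolding has_gradient_def by blast
      show ?thesis using has_derivative_compose[OF d1 d2] by (simp add: o_def)
    qed
    have "((\<lambda>x. \<Sum>i=1..n. f i (y i x)) has_derivative
        (\<lambda>h. \<Sum>i=1..n. (\<alpha> i *\<^sub>R Gs i (y i x)) \<bullet> h)) (at x)"
      by (rule has_derivative_sum) (use di in auto)
    then have "((\<lambda>x. (1 / real n) * (\<Sum>i=1..n. f i (y i x))) has_derivative
        (\<lambda>h. (1 / real n) * (\<Sum>i=1..n. (\<alpha> i *\<^sub>R Gs i (y i x)) \<bullet> h))) (at x)"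
      by (rule has_derivative_mult_right)
    moreover have "(\<lambda>h. (1 / real n) * (\<Sum>i=1..n. (\<alpha> i *\<^sub>R Gs i (y i x)) \<bullet> h)) = (\<lambda>h. Gt x \<bullet> h)"
      unfolding Gt_def by (simp add: inner_sum_left)
    ultimately show ?thesis unfolding has_gradient_def ft_def y_def by simp
  qed
  have lip: "norm (Gt x - Gt z) \<le> L\<alpha> * norm (x - z)" for x z
  proof -
    have "Gt x - Gt z = (1 / real n) *\<^sub>R (\<Sum>i=1..n. \<alpha> i *\<^sub>R (Gs i (y i x) - Gs i (y i z)))"
      unfolding Gt_def by (simp add: sum_subtractf scaleR_diff_right)
    then have "norm (Gt x - Gt z) = (1 / real n) * norm (\<Sum>i=1..n. \<alpha> i *\<^sub>R (Gs i (y i x) - Gs i (y i z)))"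
      by simp
    also have "\<dots> \<le> (1 / real n) * (\<Sum>i=1..n. (\<alpha> i)\<^sup>2 * L i * norm (x - z))"
    proof (rule mult_left_mono)
      have "norm (\<alpha> i *\<^sub>R (Gs i (y i x) - Gs i (y i z))) \<le> (\<alpha> i)\<^sup>2 * L i * norm (x - z)"
        if i: "i \<in> {1..n}" for i
      proof -
        have a: "0 < \<alpha> i" using alpha[OF i] by simp
        have "y i x - y i z = \<alpha> i *\<^sub>R (x - z)" unfolding y_def by (simp add: algebra_simps)
        then have "norm (Gs i (y i x) - Gs i (y i z)) \<le> L i * (\<alpha> i * norm (x - z))"
          using Gs[OF i] a by (metis abs_of_pos norm_scaleR)
        then have "\<alpha> i * norm (Gs i (y i x) - Gs i (y i z)) \<le> \<alpha> i * (L i * (\<alpha> i * norm (x - z)))"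
          using a by (simp add: mult_left_mono)
        moreover have "norm (\<alpha> i *\<^sub>R (Gs i (y i x) - Gs i (y i z))) = \<alpha> i * norm (Gs i (y i x) - Gs i (y i z))"
          using a by simp
        moreover have "\<alpha> i * (L i * (\<alpha> i * norm (x - z))) = (\<alpha> i)\<^sup>2 * L i * norm (x - z)"
          by (simp add: power2_eq_square)
        ultimately show ?thesis by (simp only:)
      qed
      then show "norm (\<Sum>i=1..n. \<alpha> i *\<^sub>R (Gs i (y i x) - Gs i (y i z))) \<le> (\<Sum>i=1..n. (\<alpha> i)\<^sup>2 * L i * norm (x - z))"
        by (rule order_trans[OF norm_sum sum_mono]) simp
    qed simp
    also have "\<dots> = L\<alpha> * norm (x - z)" unfolding L\<alpha>_def by (simp add: sum_distrib_right)
    finally show ?thesis .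
  qed
  have z0: "Gt x\<alpha> = 0" by (rule grad_zero_at_min[OF grad xmin])
  show ?thesis
  proof (intro allI conjI exI)
    fix x
    show "has_gradient ft (Gt x) x" by (rule grad)
    show "norm (Gt x) \<le> L\<alpha> * norm (x - x\<alpha>)" using lip[of x x\<alpha>] z0 by simp
    show "ft x - ft x\<alpha> \<le> L\<alpha> / 2 * (norm (x - x\<alpha>))\<^sup>2"
      by (rule descent[OF grad lip z0])
  qed
qed

end
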